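(* Let $q_1,q_2$ be integers with $1\le q_1\le q_2$, $A=\begin{pmatrix}3q_1&0\\0&3q_2\end{pmatrix}$, $\mathcal{D}=\left\{\begin{pmatrix}0\\0\end{pmatrix},\begin{pmatrix}1\\0\end{pmatrix},\begin{pmatrix}0\\1\end{pmatrix}\right\}$, and let $\tau$ be a regular mapping with associated enumeration $\{\lambda_k\}_{k\in\mathbb{Z}}$ of $\tau^*(\Theta_3^\tau)$. For $n\ge1$ let $\alpha_n=\frac{3^n-1}{2}$ and $\mu_n=\delta_{A^{-1}\mathcal{D}}*\delta_{A^{-2}\mathcal{D}}*\cdots*\delta_{A^{-n}\mathcal{D}}$. Then $\mu_n$ is a spectral measure with spectrum $\Lambda_{\alpha_n}=\{\lambda_k\}_{k=-\alpha_n}^{\alpha_n}$.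
   Context: $\delta_E=\frac1{\#E}\sum_{e\in E}\delta_e$ for finite $E$. A measure $\mu$ is spectral with spectrum $\Lambda$ if $\{e^{-2\pi i\langle\lambda,x\rangle}:\lambda\in\Lambda\}$ is an orthonormal basis of $L^2(\mu)$. Notation: $\Gamma_{q_1,q_2}=\{(k,l)^T\in\mathbb{Z}^2:-\frac{3q_1}{2}\le k<\frac{3q_1}{2},-\frac{3q_2}{2}\le l<\frac{3q_2}{2}\}$; $x\equiv y\pmod A$ means $x-y\in A\mathbb{Z}^2$; $\mathcal{E}_{q_1}=\{(a_1,a_2)^T\in\Gamma_{q_1,q_2}:-\frac{q_1}{2}\le a_1<\frac{q_1}{2}\}$; $\Theta_3=\{-1,0,1\}$, $\Theta_3^n$ words of length $n$, $\Theta_3^*=\bigcup_{n\ge1}\Theta_3^n$, $\Theta_3^\infty$ infinite words, $I|_k$ length-$k$ prefix, $0^k$ word of $k$ zeros. A regular mapping is $\tau:\Theta_3^*\to\Gamma_{q_1,q_2}$ with (i) $\tau(0^ki)=i\begin{pmatrix}q_1\\-q_2\end{pmatrix}$ for $k\ge0$, $i\in\Theta_3$; (ii) for $k\ge1$, $I\in\Theta_3^k\setminus\{0^k\}$ there is $e_I\in\mathcal{E}_{q_1}$ with $\tau(Ij)\equiv e_I+j\begin{pmatrix}q_1\\-q_2\end{pmatrix}\pmod A$ for all $j\in\Theta_3$; (iii) for every $I\in\Theta_3^*$, $\tau(I0^n)=\mathbf{0}$ for all large $n$. Set $\tau^*(I)=\sum_{k\ge1}A^{k-1}\tau(I|_k)$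 for $I\in\Theta_3^\tau=\{I\in\Theta_3^\infty:\tau(I|_n)=\mathbf{0}\text{ for all large }n\}$. The enumeration: $\lambda_0=\mathbf{0}$, and for $k\ne0$ written uniquely as $k=i_1+i_23+\cdots+i_n3^{n-1}$ with $i_j\in\Theta_3$, $i_n\ne0$, $\lambda_k=\tau^*(i_1i_2\cdots i_n0^\infty)$. *)

theory Defs
  imports "HOL-Analysis.Analysis"
begin

definition Theta3 :: "int set" where
  "Theta3 = {-1, 0, 1}"

text \<open>Finite words over Theta3 of length at least 1 (the set Theta3-star) are
  lists; infinite words are functions nat => int (position 0 is the first letter).\<close>

definition finite_words :: "int list set" where
  "finite_words = {I. I \<noteq> [] \<and> set I \<subseteq> Theta3}"

definition prefix :: "(nat \<Rightarrow> int) \<Rightarrow> nat \<Rightarrow> int list" where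
  "prefix w k = map w [0..<k]"

definition Gamma :: "int \<Rightarrow> int \<Rightarrow> (int \<times> int) set" where
  "Gamma q1 q2 = {(k, l). - 3 * q1 \<le> 2 * k \<and> 2 * k < 3 * q1 \<and> - 3 * q2 \<le> 2 * l \<and> 2 * l < 3 * q2}"

definition Eq1 :: "int \<Rightarrow> int \<Rightarrow> (int \<times> int) set" where
  "Eq1 q1 q2 = {(a1, a2) \<in> Gamma q1 q2. - q1 \<le> 2 * a1 \<and> 2 * a1 < q1}"

definition congA :: "int \<Rightarrow> int \<Rightarrow> int \<times> int \<Rightarrow> int \<times> int \<Rightarrow> bool" where
  "congA q1 q2 x y \<longleftrightarrow> (3 * q1) dvd (fst x - fst y) \<and> (3 * q2) dvd (snd x - snd y)"

definition Apow :: "int \<Rightarrow> int \<Rightarrow> nat \<Rightarrow> int \<times> int \<Rightarrow> int \<times> int" where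
  "Apow q1 q2 k x = ((3 * q1) ^ k * fst x, (3 * q2) ^ k * snd x)"

definition regular_mapping :: "int \<Rightarrow> int \<Rightarrow> (int list \<Rightarrow> int \<times> int) \<Rightarrow> bool" where
  "regular_mapping q1 q2 \<tau> \<longleftrightarrow>
     (\<forall>I \<in> finite_words. \<tau> I \<in> Gamma q1 q2) \<and>
     (\<forall>k::nat. \<forall>i \<in> Theta3. \<tau> (replicate k 0 @ [i]) = (i * q1, - i * q2)) \<and>
     (\<forall>I \<in> finite_words. I \<noteq> replicate (length I) 0 \<longrightarrow>
        (\<exists>e \<in> Eq1 q1 q2. \<forall>j \<in> Theta3.
           congA q1 q2 (\<tau> (I @ [j])) (fst e + j * q1, snd e - j * q2))) \<and>
     (\<forall>I \<in> finite_words. \<exists>N. \<forall>n \<ge> N. \<tau> (I @ replicate n 0) = (0, 0))"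

definition tau_star :: "int \<Rightarrow> int \<Rightarrow> (int list \<Rightarrow> int \<times> int) \<Rightarrow> (nat \<Rightarrow> int) \<Rightarrow> int \<times> int" where
  "tau_star q1 q2 \<tau> w =
     (let N = (LEAST N. \<forall>n \<ge> N. \<tau> (prefix w n) = (0, 0))
      in (\<Sum>k = 1..N. Apow q1 q2 (k - 1) (\<tau> (prefix w k))))"

definition bt_digits :: "int \<Rightarrow> int list" where
  "bt_digits k = (THE I. I \<noteq> [] \<and> set I \<subseteq> Theta3 \<and> last I \<noteq> 0 \<and>
                        k = (\<Sum>j < length I. I ! j * 3 ^ j))"

definition enum_lambda :: "int \<Rightarrow> int \<Rightarrow> (int list \<Rightarrow> int \<times> int) \<Rightarrow> int \<Rightarrow> int \<times> int" where
  "enum_lambda q1 q2 \<tau> k =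
     (if k = 0 then (0, 0)
      else (let I = bt_digits k in
            tau_star q1 q2 \<tau> (\<lambda>n. if n < length I then I ! n else 0)))"

text \<open>A discrete measure with finite support is represented by its weight function.\<close>
type_synonym dmeasure = "real \<times> real \<Rightarrow> real"

definition dsupp :: "dmeasure \<Rightarrow> (real \<times> real) set" where
  "dsupp \<mu> = {x. \<mu> x \<noteq> 0}"

definition delta_set :: "(real \<times> real) set \<Rightarrow> dmeasure" where
  "delta_set E = (\<lambda>x. if x \<in> E then 1 / real (card E) else 0)"

definition dconv :: "dmeasure \<Rightarrow> dmeasure \<Rightarrow> dmeasure" where
  "dconv \<mu> \<nu> = (\<lambda>z. \<Sum>x \<in> dsupp \<mu>. \<mu> x * \<nu> (z - x))"

definition AinvD :: "int \<Rightarrow> int \<Rightarrow> nat \<Rightarrow> (real \<times> real) set" where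
  "AinvD q1 q2 j = {(0, 0), (1 / (3 * real_of_int q1) ^ j, 0), (0, 1 / (3 * real_of_int q2) ^ j)}"

fun mu_n :: "int \<Rightarrow> int \<Rightarrow> nat \<Rightarrow> dmeasure" where
  "mu_n q1 q2 0 = delta_set {(0, 0)}"
| "mu_n q1 q2 (Suc n) = dconv (mu_n q1 q2 n) (delta_set (AinvD q1 q2 (Suc n)))"

definition expo :: "real \<times> real \<Rightarrow> real \<times> real \<Rightarrow> complex" where
  "expo l x = exp (- 2 * pi * \<i> * complex_of_real (l \<bullet> x))"

definition L2_inner :: "dmeasure \<Rightarrow> (real \<times> real \<Rightarrow> complex) \<Rightarrow> (real \<times> real \<Rightarrow> complex) \<Rightarrow> complex" where
  "L2_inner \<mu> f g = (\<Sum>x \<in> dsupp \<mu>. complex_of_real (\<mu> x) * f x * cnj (g x))"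

text \<open>For a positive measure with finite support, L^2(mu) is the finite-dimensional
  space of functions on the support; an orthonormal family is a basis iff its span
  is everything (span is automatically closed).\<close>
definition spectral_with :: "dmeasure \<Rightarrow> (real \<times> real) set \<Rightarrow> bool" where
  "spectral_with \<mu> \<Lambda> \<longleftrightarrow>
     finite (dsupp \<mu>) \<and> (\<forall>x. \<mu> x \<ge> 0) \<and>
     (\<forall>l \<in> \<Lambda>. \<forall>l' \<in> \<Lambda>. L2_inner \<mu> (expo l) (expo l') = (if l = l' then 1 else 0)) \<and>
     (\<forall>f. \<exists>F c. finite F \<and> F \<subseteq> \<Lambda> \<and>
        (\<forall>x \<in> dsupp \<mu>. f x = (\<Sum>l \<in> F. c l * expo l x)))"

definition of_int_pair :: "int \<times> int \<Rightarrow> real \<times> real" where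
  "of_int_pair p = (real_of_int (fst p), real_of_int (snd p))"

end

theory Submission
  imports Defs "Jordan_Normal_Form.Determinant"
begin


lemma sum_pad: "NS \<le> (N::nat) \<Longrightarrow> (\<Sum>k\<in>{0..<N}. if k < NS then h k else 0) = (\<Sum>k\<in>{0..<NS}. (h k :: complex))"
  by (rule sum.mono_neutral_cong_right) auto

lemma complete_of_orth:
  fixes S :: "'a set" and L :: "'b set" and w :: "'a \<Rightarrow> complex" and e :: "'b \<Rightarrow> 'a \<Rightarrow> complex"
  assumes fS: "finite S" and fL: "finite L" and cSL: "card S \<le> card L"
  and orth: "\<And>l l'. l \<in> L \<Longrightarrow> l' \<in> L \<Longrightarrow> (\<Sum>x\<in>S. w x * e l x * cnj (e l' x)) = (if l = l' then 1 else 0)"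
  shows "\<exists>c. \<forall>x\<in>S. f x = (\<Sum>l\<in>L. c l * e l x)"
proof -
  obtain xs where xs: "set xs = S" "distinct xs" using finite_distinct_list[OF fS] by blast
  obtain ls where ls: "set ls = L" "distinct ls" using finite_distinct_list[OF fL] by blast
  define N where "N = length ls"
  define NS where "NS = length xs"
  have NS: "NS \<le> N" using cSL xs ls distinct_card unfolding N_def NS_def by metis
  have bx: "bij_betw ((!) xs) {..<NS} S" using bij_betw_nth xs NS_def by blast
  have bl: "bij_betw ((!) ls) {..<N} L" using bij_betw_nth ls N_def by blast
  define E where "E = Matrix.mat N N (\<lambda>(i,j). if i < NS then e (ls!j) (xs!i) else 0)"
  define M where "M = Matrix.mat N N (\<lambda>(j,i). if i < NS then w (xs!i) * cnj (e (ls!j) (xs!i)) else 0)"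
  have E: "E \<in> carrier_mat N N" and M: "M \<in> carrier_mat N N" unfolding E_def M_def by auto
  have sumx: "(\<Sum>k\<in>{0..<NS}. g (xs!k)) = (\<Sum>x\<in>S. g x)" for g :: "'a \<Rightarrow> complex"
    using sum.reindex_bij_betw[OF bx, of g] by (simp add: atLeast0LessThan)
  have suml: "(\<Sum>k\<in>{0..<N}. g (ls!k)) = (\<Sum>x\<in>L. g x)" for g :: "'b \<Rightarrow> complex"
    using sum.reindex_bij_betw[OF bl, of g] by (simp add: atLeast0LessThan)
  have ME: "M * E = 1\<^sub>m N"
  proof (rule eq_matI)
    fix i j assume ij: "i < dim_row (1\<^sub>m N :: complex mat)" "j < dim_col (1\<^sub>m N :: complex mat)"
    hence ij': "i < N" "j < N" by auto
    have "(M * E) $$ (i, j) = (\<Sum>k\<in>{0..<N}. if k < NS then w (xs!k) * e (ls!j) (xs!k) * cnj (e (ls!i) (xs!k)) else 0)"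
      using ij' unfolding M_def E_def
      by (auto simp: scalar_prod_def intro!: sum.cong)
    also have "\<dots> = (\<Sum>k\<in>{0..<NS}. w (xs!k) * e (ls!j) (xs!k) * cnj (e (ls!i) (xs!k)))"
      by (rule sum_pad[OF NS])
    also have "\<dots> = (\<Sum>x\<in>S. w x * e (ls!j) x * cnj (e (ls!i) x))" by (rule sumx)
    also have "\<dots> = (if ls!j = ls!i then 1 else 0)" using orth ij' ls N_def by auto
    also have "\<dots> = 1\<^sub>m N $$ (i, j)" using ij' ls N_def nth_eq_iff_index_eq by auto
    finally show "(M * E) $$ (i, j) = 1\<^sub>m N $$ (i, j)" .
  qed (use M E in auto)
  have EM: "E * M = 1\<^sub>m N" using mat_mult_left_right_inverse[OF M E ME] .
  define v where "v = Matrix.vec N (\<lambda>i. if i < NS then f (xs!i) else 0)"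
  define cv where "cv = M *\<^sub>v v"
  define c where "c = (\<lambda>l. cv $ (inv_into {..<N} ((!) ls) l))"
  have v: "v \<in> carrier_vec N" unfolding v_def by auto
  have Ecv: "E *\<^sub>v cv = v"
    unfolding cv_def using assoc_mult_mat_vec[OF E M v] EM v by simp
  have cl: "c (ls!j) = cv $ j" if "j < N" for j
    unfolding c_def using bij_betw_imp_inj_on[OF bl] that by (simp add: inv_into_f_f)
  show ?thesis
  proof (intro exI ballI)
    fix x assume "x \<in> S"
    then obtain i where i: "i < NS" "x = xs!i" using xs NS_def by (metis in_set_conv_nth)
    have iN: "i < N" using i NS by simp
    have "f x = v $ i" using i iN v_def by simp
    also have "\<dots> = (E *\<^sub>v cv) $ i" using Ecv by simp
    also have "\<dots> = (\<Sum>j\<in>{0..<N}. e (ls!j) (xs!i) * cv $ j)"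
      using i iN M unfolding E_def cv_def by (auto simp: scalar_prod_def mult_mat_vec_def)
    also have "\<dots> = (\<Sum>j\<in>{0..<N}. c (ls!j) * e (ls!j) x)"
      using cl i by (auto intro!: sum.cong)
    also have "\<dots> = (\<Sum>l\<in>L. c l * e l x)" by (rule suml)
    finally show "f x = (\<Sum>l\<in>L. c l * e l x)" .
  qed
qed


definition dint :: "dmeasure \<Rightarrow> (real \<times> real \<Rightarrow> complex) \<Rightarrow> complex" where
  "dint \<mu> g = (\<Sum>x\<in>dsupp \<mu>. complex_of_real (\<mu> x) * g x)"

lemma dsupp_conv_sub:
  "dsupp (dconv \<mu> \<nu>) \<subseteq> (\<lambda>(x,y). x + y) ` (dsupp \<mu> \<times> dsupp \<nu>)"
proof
  fix z assume "z \<in> dsupp (dconv \<mu> \<nu>)"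
  hence "(\<Sum>x \<in> dsupp \<mu>. \<mu> x * \<nu> (z - x)) \<noteq> 0" by (simp add: dsupp_def dconv_def)
  then obtain x where x: "x \<in> dsupp \<mu>" "\<mu> x * \<nu> (z - x) \<noteq> 0" by (meson sum.neutral)
  hence "z - x \<in> dsupp \<nu>" by (simp add: dsupp_def)
  thus "z \<in> (\<lambda>(x,y). x + y) ` (dsupp \<mu> \<times> dsupp \<nu>)" using x
    by (auto intro!: image_eqI[where x="(x, z - x)"])
qed

lemma finite_dsupp_conv:
  "finite (dsupp \<mu>) \<Longrightarrow> finite (dsupp \<nu>) \<Longrightarrow> finite (dsupp (dconv \<mu> \<nu>))"
  using dsupp_conv_sub finite_subset by blast

lemma dint_conv:
  assumes f1: "finite (dsupp \<mu>)" and f2: "finite (dsupp \<nu>)"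
  shows "dint (dconv \<mu> \<nu>) g = dint \<mu> (\<lambda>x. dint \<nu> (\<lambda>y. g (x + y)))"
proof -
  define T where "T = (\<lambda>(x,y). x + y) ` (dsupp \<mu> \<times> dsupp \<nu>)"
  have fT: "finite T" unfolding T_def using f1 f2 by auto
  have "dint (dconv \<mu> \<nu>) g = (\<Sum>z\<in>T. complex_of_real (dconv \<mu> \<nu> z) * g z)"
    unfolding dint_def using dsupp_conv_sub[of \<mu> \<nu>] fT
    by (intro sum.mono_neutral_left) (auto simp: T_def dsupp_def)
  also have "\<dots> = (\<Sum>z\<in>T. \<Sum>x\<in>dsupp \<mu>. complex_of_real (\<mu> x) * (complex_of_real (\<nu> (z - x)) * g z))"
    unfolding dconv_def by (simp add: sum_distrib_right mult.assoc)
  also have "\<dots> = (\<Sum>x\<in>dsupp \<mu>. complex_of_real (\<mu> x) * (\<Sum>z\<in>T. complex_of_real (\<nu> (z - x)) * g z))"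
    by (subst sum.swap) (simp add: sum_distrib_left)
  also have "\<dots> = dint \<mu> (\<lambda>x. dint \<nu> (\<lambda>y. g (x + y)))"
    unfolding dint_def
  proof (rule sum.cong[OF refl])
    fix x assume x: "x \<in> dsupp \<mu>"
    have sub: "(\<lambda>y. x + y) ` dsupp \<nu> \<subseteq> T" using x unfolding T_def by auto
    have "(\<Sum>z\<in>T. complex_of_real (\<nu> (z - x)) * g z) = (\<Sum>z\<in>(\<lambda>y. x + y) ` dsupp \<nu>. complex_of_real (\<nu> (z - x)) * g z)"
    proof (rule sum.mono_neutral_right[OF fT sub], intro ballI)
      fix z assume "z \<in> T - (\<lambda>y. x + y) ` dsupp \<nu>"
      hence "\<nu> (z - x) = 0" by (force simp: dsupp_def intro: image_eqI[where x="z-x"])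
      thus "complex_of_real (\<nu> (z - x)) * g z = 0" by simp
    qed
    also have "\<dots> = (\<Sum>y\<in>dsupp \<nu>. complex_of_real (\<nu> y) * g (x + y))"
      by (subst sum.reindex) (auto simp: inj_on_def)
    finally show "complex_of_real (\<mu> x) * (\<Sum>z\<in>T. complex_of_real (\<nu> (z - x)) * g z) =
       complex_of_real (\<mu> x) * (\<Sum>y\<in>dsupp \<nu>. complex_of_real (\<nu> y) * g (x + y))" by simp
  qed
  finally show ?thesis .
qed

lemma expo_add: "expo d (x + y) = expo d x * expo d y"
  unfolding expo_def by (simp add: inner_add_right algebra_simps flip: exp_add)

lemma expo_zero0: "expo d 0 = 1" unfolding expo_def by simp
lemma expo_zero: "expo d 0 = 1" "expo d (0,0) = 1" using expo_zero0 by (auto simp: zero_prod_def)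

lemma expo_diff: "expo l x * cnj (expo l' x) = expo (l - l') x"
  unfolding expo_def by (simp add: exp_cnj inner_diff_left algebra_simps flip: exp_add)

lemma dint_delta:
  assumes "finite E" "E \<noteq> {}"
  shows "dint (delta_set E) g = (\<Sum>x\<in>E. g x) / of_nat (card E)"
proof -
  have "dsupp (delta_set E) = E" using assms by (auto simp: dsupp_def delta_set_def)
  thus ?thesis unfolding dint_def delta_set_def by (simp add: sum_divide_distrib)
qed

lemma mu_n_basic: "finite (dsupp (mu_n q1 q2 n)) \<and> (\<forall>x. mu_n q1 q2 n x \<ge> 0)"
proof (induction n)
  case 0
  have "dsupp (delta_set {(0::real, 0::real)}) \<subseteq> {(0,0)}" by (auto simp: dsupp_def delta_set_def)
  then show ?case by (auto simp: delta_set_def intro: finite_subset)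
next
  case (Suc n)
  have "dsupp (delta_set (AinvD q1 q2 (Suc n))) \<subseteq> AinvD q1 q2 (Suc n)"
    by (auto simp: dsupp_def delta_set_def)
  hence "finite (dsupp (delta_set (AinvD q1 q2 (Suc n))))"
    by (rule finite_subset) (simp add: AinvD_def)
  with Suc have "finite (dsupp (mu_n q1 q2 (Suc n)))" by (simp add: finite_dsupp_conv)
  with Suc show ?case
    by (auto simp: dconv_def delta_set_def intro!: sum_nonneg)
qed

definition mfac :: "int \<Rightarrow> int \<Rightarrow> nat \<Rightarrow> real \<times> real \<Rightarrow> complex" where
  "mfac q1 q2 j d = dint (delta_set (AinvD q1 q2 j)) (expo d)"

lemma finite_dsupp_delta: "finite E \<Longrightarrow> finite (dsupp (delta_set E))"
  by (rule finite_subset[of _ E]) (auto simp: dsupp_def delta_set_def)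

lemma dint_mu_n_expo: "dint (mu_n q1 q2 n) (expo d) = (\<Prod>j\<in>{1..n}. mfac q1 q2 j d)"
proof (induction n)
  case 0
  show ?case by (simp add: dint_delta expo_zero)
next
  case (Suc n)
  have f1: "finite (dsupp (mu_n q1 q2 n))" using mu_n_basic by blast
  have f2: "finite (dsupp (delta_set (AinvD q1 q2 (Suc n))))"
    by (rule finite_dsupp_delta) (simp add: AinvD_def)
  have "dint (mu_n q1 q2 (Suc n)) (expo d) = dint (mu_n q1 q2 n) (\<lambda>x. expo d x * mfac q1 q2 (Suc n) d)"
    unfolding mu_n.simps dint_conv[OF f1 f2]
    by (simp add: expo_add mfac_def dint_def sum_distrib_left mult.assoc mult.left_commute)
  also have "\<dots> = dint (mu_n q1 q2 n) (expo d) * mfac q1 q2 (Suc n) d"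
    by (simp add: dint_def sum_distrib_right mult.assoc)
  finally show ?case using Suc by (simp add: prod.nat_ivl_Suc')
qed

lemma AinvD_card: "1 \<le> q1 \<Longrightarrow> 1 \<le> q2 \<Longrightarrow> card (AinvD q1 q2 j) = 3"
  unfolding AinvD_def by auto

lemma mfac_zero_d: "1 \<le> q1 \<Longrightarrow> 1 \<le> q2 \<Longrightarrow> mfac q1 q2 j 0 = 1"
  unfolding mfac_def
  by (subst dint_delta) (auto simp: AinvD_card expo_def AinvD_def)

lemma L2_inner_dint: "L2_inner \<mu> (expo l) (expo l') = dint \<mu> (expo (l - l'))"
  unfolding L2_inner_def dint_def by (simp add: mult.assoc expo_diff)

lemma mass_mu_n: assumes "1 \<le> q1" "1 \<le> q2" shows "L2_inner (mu_n q1 q2 n) (expo l) (expo l) = 1"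
  unfolding L2_inner_dint dint_mu_n_expo using mfac_zero_d[OF assms] by simp

lemma card_dsupp_delta: "finite E \<Longrightarrow> card (dsupp (delta_set E)) \<le> card E"
  by (rule card_mono) (auto simp: dsupp_def delta_set_def)

lemma card_dsupp_conv:
  assumes "finite (dsupp \<mu>)" "finite (dsupp \<nu>)"
  shows "card (dsupp (dconv \<mu> \<nu>)) \<le> card (dsupp \<mu>) * card (dsupp \<nu>)"
proof -
  have "card (dsupp (dconv \<mu> \<nu>)) \<le> card ((\<lambda>(x,y). x + y) ` (dsupp \<mu> \<times> dsupp \<nu>))"
    using dsupp_conv_sub assms by (intro card_mono) auto
  also have "\<dots> \<le> card (dsupp \<mu> \<times> dsupp \<nu>)" by (rule card_image_le) (use assms in auto)
  finally show ?thesis by (simp add: card_cartesian_product)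
qed

lemma card_mu_n: assumes "1 \<le> q1" "1 \<le> q2" shows "card (dsupp (mu_n q1 q2 n)) \<le> 3 ^ n"
proof (induction n)
  case 0
  have "card (dsupp (delta_set {(0::real,0::real)})) \<le> card {(0::real,0::real)}"
    by (rule card_dsupp_delta) simp
  then show ?case by simp
next
  case (Suc n)
  have f1: "finite (dsupp (mu_n q1 q2 n))" using mu_n_basic by blast
  have f2: "finite (dsupp (delta_set (AinvD q1 q2 (Suc n))))"
    by (rule finite_dsupp_delta) (simp add: AinvD_def)
  have c2: "card (dsupp (delta_set (AinvD q1 q2 (Suc n)))) \<le> 3"
    using card_dsupp_delta[of "AinvD q1 q2 (Suc n)"] AinvD_card[OF assms, of "Suc n"]
    unfolding AinvD_def by simp
  have "card (dsupp (mu_n q1 q2 (Suc n))) \<le> card (dsupp (mu_n q1 q2 n)) * card (dsupp (delta_set (AinvD q1 q2 (Suc n))))"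
    using card_dsupp_conv[OF f1 f2] by simp
  also have "\<dots> \<le> 3 ^ n * 3" using Suc c2 by (intro mult_mono) auto
  finally show ?case by simp
qed



lemma exp_shift_int: "exp (- 2 * complex_of_real pi * \<i> * complex_of_real (r + real_of_int s)) =
   exp (- 2 * complex_of_real pi * \<i> * complex_of_real r)"
proof -
  have "- 2 * complex_of_real pi * \<i> * complex_of_real (r + real_of_int s) =
     - 2 * complex_of_real pi * \<i> * complex_of_real r + \<i> * (of_int (-s) * (of_real pi * 2))"
    by (simp add: algebra_simps)
  thus ?thesis by (simp only: exp_plus_2pin)
qed

lemma root3:
  fixes a :: int assumes "\<not> 3 dvd a"
  shows "1 + exp (- 2 * complex_of_real pi * \<i> * complex_of_real (a / 3)) +
             exp (- 2 * complex_of_real pi * \<i> * complex_of_real (- a / 3)) = 0"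
proof -
  define u where "u = exp (\<i> * complex_of_real (2 * pi * a / 3))"
  have u3: "u ^ 3 = 1"
  proof -
    have "u ^ 3 = exp (of_nat 3 * (\<i> * complex_of_real (2 * pi * a / 3)))"
      unfolding u_def by (simp only: exp_of_nat_mult)
    also have "of_nat 3 * (\<i> * complex_of_real (2 * pi * a / 3)) = \<i> * (of_int a * (of_real pi * 2))"
      by (simp add: field_simps)
    finally show ?thesis by simp
  qed
  have u1: "u \<noteq> 1"
  proof
    assume "u = 1"
    then obtain n :: int where "2 * pi * a / 3 = of_int (2 * n) * pi"
      unfolding u_def exp_eq_1 by auto
    hence "real_of_int a = 3 * n" by (simp add: field_simps)
    hence "a = 3 * n" by linarith
    with assms show False by simp
  qed
  have "(u - 1) * (1 + u + u^2) = u^3 - 1" by (simp add: algebra_simps power2_eq_square power3_eq_cube)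
  with u3 u1 have s: "1 + u + u^2 = 0" by simp
  have e1: "exp (- 2 * complex_of_real pi * \<i> * complex_of_real (- a / 3)) = u"
    unfolding u_def by (simp add: algebra_simps)
  have "exp (- 2 * complex_of_real pi * \<i> * complex_of_real (a / 3)) * u = 1"
    unfolding u_def by (simp add: algebra_simps flip: exp_add)
  hence e2: "exp (- 2 * complex_of_real pi * \<i> * complex_of_real (a / 3)) = u^2"
    using u3 by (metis (no_types, lifting) mult.commute mult_cancel_left1 power2_eq_square power3_eq_cube mult.assoc u1 mult_cancel_right zero_neq_one)
  show ?thesis using s e1 e2 by (simp add: algebra_simps)
qed

lemma mfac_zero:
  assumes q: "1 \<le> q1" "1 \<le> q2"
  and h1: "(3*q1)^(Suc p) dvd (D1 - (3*q1)^p * a * q1)"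
  and h2: "(3*q2)^(Suc p) dvd (D2 + (3*q2)^p * a * q2)"
  and a: "\<not> 3 dvd a"
  shows "mfac q1 q2 (Suc p) (of_int_pair (D1, D2)) = 0"
proof -
  obtain s1 where s1: "D1 - (3*q1)^p * a * q1 = (3*q1)^(Suc p) * s1" using h1 by (elim dvdE)
  obtain s2 where s2: "D2 + (3*q2)^p * a * q2 = (3*q2)^(Suc p) * s2" using h2 by (elim dvdE)
  have "real_of_int D1 = (3 * real_of_int q1)^p * (a * q1 + 3 * q1 * s1)"
    using arg_cong[OF s1, of real_of_int] by (simp add: algebra_simps)
  hence r1: "real_of_int D1 * (1 / (3 * real_of_int q1)^(Suc p)) = a/3 + s1"
    using q by (simp add: field_simps)
  have "real_of_int D2 = (3 * real_of_int q2)^p * (- a * q2 + 3 * q2 * s2)"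
    using arg_cong[OF s2, of real_of_int] by (simp add: algebra_simps)
  hence r2: "real_of_int D2 * (1 / (3 * real_of_int q2)^(Suc p)) = -a/3 + s2"
    using q by (simp add: field_simps)
  define x1 where "x1 = 1 / (3 * real_of_int q1)^(Suc p)"
  define y1 where "y1 = 1 / (3 * real_of_int q2)^(Suc p)"
  have x1: "x1 \<noteq> 0" and y1: "y1 \<noteq> 0" using q unfolding x1_def y1_def by auto
  have A: "AinvD q1 q2 (Suc p) = {(0,0), (x1, 0), (0, y1)}" unfolding AinvD_def x1_def y1_def by simp
  have "mfac q1 q2 (Suc p) (of_int_pair (D1, D2)) =
     (expo (of_int_pair (D1, D2)) (0,0) + expo (of_int_pair (D1, D2)) (x1,0) + expo (of_int_pair (D1, D2)) (0,y1)) / 3"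
    unfolding mfac_def A using x1 y1 by (subst dint_delta) (auto simp: add.assoc)
  also have "expo (of_int_pair (D1, D2)) (x1,0) = exp (- 2 * complex_of_real pi * \<i> * complex_of_real (a / 3))"
    unfolding expo_def of_int_pair_def using r1 exp_shift_int[of "a/3" s1] by (simp add: x1_def)
  also have "expo (of_int_pair (D1, D2)) (0,y1) = exp (- 2 * complex_of_real pi * \<i> * complex_of_real (- a / 3))"
    unfolding expo_def of_int_pair_def using r2 exp_shift_int[of "- a/3" s2] by (simp add: y1_def)
  finally show ?thesis using root3[OF a] by (simp add: expo_zero)
qed



definition bval :: "int list \<Rightarrow> int" where
  "bval I = (\<Sum>j < length I. I ! j * 3 ^ j)"

definition bvalid :: "int \<Rightarrow> int list \<Rightarrow> bool" where
  "bvalid k I \<longleftrightarrow> I \<noteq> [] \<and> set I \<subseteq> Theta3 \<and> last I \<noteq> 0 \<and> k = bval I"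

lemma bval_Nil [simp]: "bval [] = 0" by (simp add: bval_def)

lemma bval_Cons [simp]: "bval (x # xs) = x + 3 * bval xs"
  unfolding bval_def by (simp add: sum.lessThan_Suc_shift sum_distrib_left mult.assoc mult.left_commute del: sum.lessThan_Suc)

lemma Theta3_iff: "x \<in> Theta3 \<longleftrightarrow> x = -1 \<or> x = 0 \<or> x = (1::int)" by (auto simp: Theta3_def)

lemma bval_nonzero: "xs \<noteq> [] \<Longrightarrow> set xs \<subseteq> Theta3 \<Longrightarrow> last xs \<noteq> 0 \<Longrightarrow> bval xs \<noteq> 0"
proof (induction xs)
  case Nil then show ?case by simp
next
  case (Cons x xs)
  show ?case
  proof (cases "xs = []")
    case True then show ?thesis using Cons by simp
  next
    case False
    then have "bval xs \<noteq> 0" using Cons by simp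
    moreover have "x = -1 \<or> x = 0 \<or> x = 1" using Cons.prems by (auto simp: Theta3_iff)
    ultimately show ?thesis by auto
  qed
qed

lemma bt_exists: "k \<noteq> 0 \<Longrightarrow> \<exists>I. bvalid k I"
proof (induction "nat \<bar>k\<bar>" arbitrary: k rule: less_induct)
  case less
  define r where "r = (k + 1) mod 3 - 1"
  define m where "m = (k - r) div 3"
  have r: "r = -1 \<or> r = 0 \<or> r = 1" unfolding r_def by auto
  have km: "k = 3 * m + r" unfolding m_def r_def by presburger
  show ?case
  proof (cases "m = 0")
    case True
    then show ?thesis using km less.prems r by (intro exI[of _ "[r]"]) (auto simp: bvalid_def Theta3_def)
  next
    case False
    have "nat \<bar>m\<bar> < nat \<bar>k\<bar>" using km r False by auto
    then obtain I where I: "bvalid m I" using less False by blast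
    show ?thesis using I km r
      by (intro exI[of _ "r # I"]) (auto simp: bvalid_def Theta3_def)
  qed
qed

lemma bt_unique: "bvalid k I \<Longrightarrow> bvalid k J \<Longrightarrow> I = J"
proof (induction I arbitrary: k J)
  case Nil then show ?case by (simp add: bvalid_def)
next
  case (Cons x xs)
  obtain y ys where J: "J = y # ys" using Cons.prems(2) by (cases J) (auto simp: bvalid_def)
  have x: "x = -1 \<or> x = 0 \<or> x = 1" and y: "y = -1 \<or> y = 0 \<or> y = 1"
    using Cons.prems J by (auto simp: bvalid_def Theta3_iff)
  have eq: "x + 3 * bval xs = y + 3 * bval ys" using Cons.prems J by (simp add: bvalid_def)
  have xy: "x = y" using x y eq by presburger
  hence eqv: "bval xs = bval ys" using eq by simp
  show ?case
  proof (cases "xs = []")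
    case True
    hence "bval ys = 0" using eqv by simp
    have "ys = []"
    proof (rule ccontr)
      assume ys: "ys \<noteq> []"
      have "last ys \<noteq> 0" "set ys \<subseteq> Theta3" using Cons.prems(2) J ys by (auto simp: bvalid_def)
      hence "bval ys \<noteq> 0" using bval_nonzero ys by blast
      thus False using \<open>bval ys = 0\<close> by simp
    qed
    thus ?thesis using True xy J by simp
  next
    case False
    have ys: "ys \<noteq> []"
    proof
      assume "ys = []"
      hence "bval xs = 0" using eqv by simp
      thus False using bval_nonzero[of xs] Cons.prems False by (auto simp: bvalid_def)
    qed
    have "bvalid (bval xs) xs" using Cons.prems False by (auto simp: bvalid_def)
    moreover have "bvalid (bval xs) ys" using Cons.prems J ys eqv by (auto simp: bvalid_def)
    ultimately have "xs = ys" using Cons.IH by blast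
    thus ?thesis using xy J by simp
  qed
qed

lemma bt_digits_valid: "k \<noteq> 0 \<Longrightarrow> bvalid k (bt_digits k)"
proof -
  assume k: "k \<noteq> 0"
  have "\<exists>!I. bvalid k I" using bt_exists[OF k] bt_unique by blast
  hence "bvalid k (THE I. bvalid k I)" by (rule theI')
  thus ?thesis unfolding bt_digits_def bvalid_def bval_def by simp
qed

lemma digit_bound: "(\<And>j. j < m \<Longrightarrow> d j \<in> Theta3) \<Longrightarrow> 2 * \<bar>\<Sum>j<m. d j * 3 ^ j\<bar> \<le> 3 ^ m - (1::int)"
proof (induction m)
  case 0 then show ?case by simp
next
  case (Suc m)
  have IH: "2 * \<bar>\<Sum>j<m. d j * 3 ^ j\<bar> \<le> 3 ^ m - 1" using Suc by simp
  have "\<bar>d m\<bar> \<le> 1" using Suc.prems[of m] by (auto simp: Theta3_def)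
  hence "\<bar>d m * 3 ^ m\<bar> \<le> 3 ^ m" by (simp add: abs_mult)
  moreover have "\<bar>(\<Sum>j<m. d j * 3 ^ j) + d m * 3 ^ m\<bar> \<le> \<bar>\<Sum>j<m. d j * 3 ^ j\<bar> + \<bar>d m * 3 ^ m\<bar>"
    by (rule abs_triangle_ineq)
  ultimately show ?case using IH by simp
qed



lemma bvalid_len_bound: assumes "bvalid k I" shows "3 ^ (length I - 1) + 1 \<le> 2 * \<bar>k\<bar>"
proof -
  obtain m where m: "length I = Suc m" using assms by (cases "length I") (auto simp: bvalid_def)
  have k: "k = (\<Sum>j<m. I ! j * 3 ^ j) + I ! m * 3 ^ m" using assms m by (simp add: bvalid_def bval_def)
  have "I ! m = last I" using m assms by (simp add: bvalid_def last_conv_nth)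
  moreover have "last I \<in> Theta3" using assms by (auto simp: bvalid_def)
  ultimately have Im: "I ! m = 1 \<or> I ! m = -1" using assms by (auto simp: bvalid_def Theta3_def)
  have "2 * \<bar>\<Sum>j<m. I ! j * 3 ^ j\<bar> \<le> 3 ^ m - 1"
    by (rule digit_bound) (use assms m in \<open>auto simp: bvalid_def\<close>)
  thus ?thesis using k Im m by auto
qed

lemma bvalid_len: assumes "bvalid k I" "2 * \<bar>k\<bar> \<le> 3 ^ n - 1" shows "length I \<le> n"
proof -
  have "(3::int) ^ (length I - 1) < 3 ^ n" using bvalid_len_bound[OF assms(1)] assms(2) by linarith
  hence "length I - 1 < n" using power_strict_increasing_iff[of "3::int"] by simp
  moreover have "length I \<noteq> 0" using assms by (simp add: bvalid_def)
  ultimately show ?thesis by linarith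
qed

definition wd :: "int \<Rightarrow> nat \<Rightarrow> int" where
  "wd k = (if k = 0 then (\<lambda>_. 0) else (\<lambda>n. if n < length (bt_digits k) then bt_digits k ! n else 0))"

lemma wd_props:
  assumes "2 * \<bar>k\<bar> \<le> 3 ^ n - 1"
  shows "wd k j \<in> Theta3" "n \<le> j \<Longrightarrow> wd k j = 0" "k = (\<Sum>j<n. wd k j * 3 ^ j)"
proof -
  show "wd k j \<in> Theta3"
  proof (cases "k = 0")
    case True thus ?thesis by (simp add: wd_def Theta3_def)
  next
    case False
    hence "bvalid k (bt_digits k)" by (rule bt_digits_valid)
    show ?thesis
    proof (cases "j < length (bt_digits k)")
      case True
      hence "bt_digits k ! j \<in> Theta3" using \<open>bvalid k (bt_digits k)\<close> nth_mem[OF True]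
        unfolding bvalid_def by blast
      thus ?thesis using False True by (simp add: wd_def)
    qed (use False in \<open>simp add: wd_def Theta3_def\<close>)
  qed
  show "n \<le> j \<Longrightarrow> wd k j = 0"
  proof (cases "k = 0")
    case True thus ?thesis by (simp add: wd_def)
  next
    case False
    hence "bvalid k (bt_digits k)" by (rule bt_digits_valid)
    hence "length (bt_digits k) \<le> n" using bvalid_len assms by blast
    thus "n \<le> j \<Longrightarrow> wd k j = 0" using False by (simp add: wd_def)
  qed
  show "k = (\<Sum>j<n. wd k j * 3 ^ j)"
  proof (cases "k = 0")
    case True thus ?thesis by (simp add: wd_def)
  next
    case False
    hence v: "bvalid k (bt_digits k)" by (rule bt_digits_valid)
    hence L: "length (bt_digits k) \<le> n" using bvalid_len assms by blast
    have "(\<Sum>j<n. wd k j * 3 ^ j) = (\<Sum>j<length (bt_digits k). bt_digits k ! j * 3 ^ j)"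
      using L False by (intro sum.mono_neutral_cong_right) (auto simp: wd_def)
    thus ?thesis using v by (simp add: bvalid_def bval_def)
  qed
qed

lemma prefix_pad: "length I \<le> m \<Longrightarrow>
  prefix (\<lambda>n. if n < length I then I ! n else 0) m = I @ replicate (m - length I) 0"
  by (rule nth_equalityI) (auto simp: prefix_def nth_append)

lemma tau_star_eq:
  assumes "\<forall>n\<ge>N. \<tau> (prefix w n) = (0,0)"
  shows "\<exists>M0. \<forall>M\<ge>M0. tau_star q1 q2 \<tau> w = (\<Sum>m\<in>{1..M}. Apow q1 q2 (m-1) (\<tau> (prefix w m)))"
proof -
  define N0 where "N0 = (LEAST N. \<forall>n \<ge> N. \<tau> (prefix w n) = (0, 0))"
  have P: "\<forall>n \<ge> N0. \<tau> (prefix w n) = (0, 0)" unfolding N0_def by (rule LeastI[of _ N]) (rule assms)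
  show ?thesis
  proof (intro exI allI impI)
    fix M assume M: "N0 \<le> M"
    have "tau_star q1 q2 \<tau> w = (\<Sum>m\<in>{1..N0}. Apow q1 q2 (m-1) (\<tau> (prefix w m)))"
      unfolding tau_star_def N0_def by simp
    also have "\<dots> = (\<Sum>m\<in>{1..M}. Apow q1 q2 (m-1) (\<tau> (prefix w m)))"
      using M P by (intro sum.mono_neutral_left) (auto simp: Apow_def zero_prod_def)
    finally show "tau_star q1 q2 \<tau> w = (\<Sum>m\<in>{1..M}. Apow q1 q2 (m-1) (\<tau> (prefix w m)))" .
  qed
qed

lemma enum_expand:
  assumes reg: "regular_mapping q1 q2 \<tau>"
  shows "\<exists>M0. \<forall>M\<ge>M0. enum_lambda q1 q2 \<tau> k = (\<Sum>m\<in>{1..M}. Apow q1 q2 (m-1) (\<tau> (prefix (wd k) m)))"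
proof (cases "k = 0")
  case True
  have z: "\<tau> (prefix (wd k) m) = (0,0)" if "m \<ge> 1" for m
  proof -
    have "prefix (wd k) m = replicate (m - 1) 0 @ [0]"
      using True that by (cases m) (auto simp: wd_def prefix_def map_replicate_const replicate_append_same)
    thus ?thesis using reg by (simp add: regular_mapping_def Theta3_def)
  qed
  have "(\<Sum>m\<in>{1..M}. Apow q1 q2 (m-1) (\<tau> (prefix (wd k) m))) = 0" for M
    by (intro sum.neutral ballI) (simp add: z Apow_def zero_prod_def)
  thus ?thesis using True by (intro exI[of _ 0]) (simp add: enum_lambda_def zero_prod_def)
next
  case False
  define I where "I = bt_digits k"
  have v: "bvalid k I" unfolding I_def using False by (rule bt_digits_valid)
  hence fw: "I \<in> finite_words" by (simp add: bvalid_def finite_words_def)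
  then obtain N where N: "\<forall>n\<ge>N. \<tau> (I @ replicate n 0) = (0,0)" using reg by (auto simp: regular_mapping_def)
  have w: "wd k = (\<lambda>n. if n < length I then I ! n else 0)" unfolding wd_def I_def using False by simp
  have "\<forall>n\<ge>length I + N. \<tau> (prefix (wd k) n) = (0,0)"
    using N by (auto simp: w prefix_pad)
  moreover have "enum_lambda q1 q2 \<tau> k = tau_star q1 q2 \<tau> (wd k)"
    using False by (simp add: enum_lambda_def wd_def Let_def)
  ultimately show ?thesis using tau_star_eq[of "length I + N" \<tau> "wd k" q1 q2] by simp
qed

lemma tau_diff:
  assumes reg: "regular_mapping q1 q2 \<tau>" and J: "set J \<subseteq> Theta3" and i: "i \<in> Theta3" "i' \<in> Theta3"
  shows "(3*q1) dvd (fst (\<tau> (J @ [i])) - fst (\<tau> (J @ [i'])) - (i - i') * q1)"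
    "(3*q2) dvd (snd (\<tau> (J @ [i])) - snd (\<tau> (J @ [i'])) - (- (i - i') * q2))"
proof -
  have "(3*q1) dvd (fst (\<tau> (J @ [i])) - fst (\<tau> (J @ [i'])) - (i - i') * q1) \<and>
    (3*q2) dvd (snd (\<tau> (J @ [i])) - snd (\<tau> (J @ [i'])) - (- (i - i') * q2))"
  proof (cases "J = replicate (length J) 0")
    case True
    have "\<tau> (J @ [i]) = (i * q1, - i * q2)" "\<tau> (J @ [i']) = (i' * q1, - i' * q2)"
      using reg i True by (metis regular_mapping_def)+
    thus ?thesis by (simp add: algebra_simps)
  next
    case False
    hence "J \<noteq> []" by auto
    hence "J \<in> finite_words" using J by (simp add: finite_words_def)
    then obtain e where e: "\<forall>j \<in> Theta3. congA q1 q2 (\<tau> (J @ [j])) (fst e + j * q1, snd e - j * q2)"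
      using reg False unfolding regular_mapping_def by blast
    have a: "congA q1 q2 (\<tau> (J @ [i])) (fst e + i * q1, snd e - i * q2)"
      and b: "congA q1 q2 (\<tau> (J @ [i'])) (fst e + i' * q1, snd e - i' * q2)" using e i by auto
    have a1: "(3*q1) dvd (fst (\<tau> (J @ [i])) - (fst e + i * q1))"
      and a2: "(3*q2) dvd (snd (\<tau> (J @ [i])) - (snd e - i * q2))" using a by (simp_all add: congA_def)
    have b1: "(3*q1) dvd (fst (\<tau> (J @ [i'])) - (fst e + i' * q1))"
      and b2: "(3*q2) dvd (snd (\<tau> (J @ [i'])) - (snd e - i' * q2))" using b by (simp_all add: congA_def)
    have "(3*q1) dvd ((fst (\<tau> (J @ [i])) - (fst e + i * q1)) - (fst (\<tau> (J @ [i'])) - (fst e + i' * q1)))"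
      using a1 b1 by (rule dvd_diff)
    moreover have "(3*q2) dvd ((snd (\<tau> (J @ [i])) - (snd e - i * q2)) - (snd (\<tau> (J @ [i'])) - (snd e - i' * q2)))"
      using a2 b2 by (rule dvd_diff)
    ultimately show ?thesis by (simp add: algebra_simps)
  qed
  thus "(3*q1) dvd (fst (\<tau> (J @ [i])) - fst (\<tau> (J @ [i'])) - (i - i') * q1)"
    "(3*q2) dvd (snd (\<tau> (J @ [i])) - snd (\<tau> (J @ [i'])) - (- (i - i') * q2))" by auto
qed

lemma dvd_part:
  fixes c :: int and t :: "nat \<Rightarrow> int"
  assumes "Suc q \<le> M" "\<And>m. m \<le> q \<Longrightarrow> t m = 0" "c dvd (t (Suc q) - b)"
  shows "c ^ Suc q dvd ((\<Sum>m\<in>{1..M}. c ^ (m-1) * t m) - c ^ q * b)"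
proof -
  have mem: "Suc q \<in> {1..M}" using assms by auto
  define R where "R = (\<Sum>m\<in>{1..M} - {Suc q}. c ^ (m-1) * t m)"
  have dec: "(\<Sum>m\<in>{1..M}. c ^ (m-1) * t m) = c ^ q * t (Suc q) + R"
    unfolding R_def by (subst sum.remove[OF finite_atLeastAtMost mem]) simp
  have "c ^ Suc q dvd R" unfolding R_def
  proof (rule dvd_sum)
    fix m assume m: "m \<in> {1..M} - {Suc q}"
    show "c ^ Suc q dvd c ^ (m-1) * t m"
    proof (cases "m \<le> q")
      case True thus ?thesis using assms by simp
    next
      case False
      hence "Suc q \<le> m - 1" using m by auto
      hence "c ^ Suc q dvd c ^ (m-1)" by (rule le_imp_power_dvd)
      thus ?thesis by (rule dvd_mult2)
    qed
  qed
  moreover have "c ^ Suc q dvd c ^ q * (t (Suc q) - b)"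
    using assms(3) by (simp add: mult_dvd_mono)
  ultimately have "c ^ Suc q dvd c ^ q * (t (Suc q) - b) + R" by (rule dvd_add[rotated])
  moreover have "c ^ q * (t (Suc q) - b) + R = (\<Sum>m\<in>{1..M}. c ^ (m-1) * t m) - c ^ q * b"
    unfolding dec by (simp add: algebra_simps)
  ultimately show ?thesis by simp
qed



lemma fst_of_int_pair_diff: "of_int_pair a - of_int_pair b = of_int_pair (a - b)"
  by (simp add: of_int_pair_def)

lemma orth_main:
  assumes reg: "regular_mapping q1 q2 \<tau>" and q: "1 \<le> q1" "1 \<le> q2"
    and rk: "2 * \<bar>k\<bar> \<le> 3 ^ n - 1" and rk': "2 * \<bar>k'\<bar> \<le> 3 ^ n - 1" and kk: "k \<noteq> k'"
  shows "\<exists>p<n. mfac q1 q2 (Suc p) (of_int_pair (enum_lambda q1 q2 \<tau> k - enum_lambda q1 q2 \<tau> k')) = 0"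
proof -
  define w where "w = wd k"
  define w' where "w' = wd k'"
  have ex: "\<exists>j. w j \<noteq> w' j"
  proof (rule ccontr)
    assume "\<not> (\<exists>j. w j \<noteq> w' j)"
    hence "w = w'" by auto
    hence "k = k'" using wd_props(3)[OF rk] wd_props(3)[OF rk'] unfolding w_def w'_def by metis
    thus False using kk by simp
  qed
  define q where "q = (LEAST j. w j \<noteq> w' j)"
  have qd: "w q \<noteq> w' q" unfolding q_def using ex by (rule LeastI_ex)
  have before: "\<And>j. j < q \<Longrightarrow> w j = w' j" unfolding q_def using not_less_Least by blast
  have qn: "q < n"
  proof (rule ccontr)
    assume "\<not> q < n"
    hence "w q = 0" "w' q = 0" using wd_props(2)[OF rk] wd_props(2)[OF rk'] unfolding w_def w'_def by auto
    thus False using qd by simp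
  qed
  have pre: "prefix w m = prefix w' m" if "m \<le> q" for m
    using before that unfolding prefix_def by (auto intro!: map_cong)
  have psuc: "prefix w (Suc q) = prefix w q @ [w q]" "prefix w' (Suc q) = prefix w q @ [w' q]"
    using pre[of q] by (simp_all add: prefix_def)
  have th: "w j \<in> Theta3" "w' j \<in> Theta3" for j
    unfolding w_def w'_def using wd_props(1)[OF rk] wd_props(1)[OF rk'] by auto
  have J: "set (prefix w q) \<subseteq> Theta3" using th by (auto simp: prefix_def)
  obtain M0 where M0: "\<forall>M\<ge>M0. enum_lambda q1 q2 \<tau> k = (\<Sum>m\<in>{1..M}. Apow q1 q2 (m-1) (\<tau> (prefix w m)))"
    using enum_expand[OF reg, of k] unfolding w_def by blast
  obtain M0' where M0': "\<forall>M\<ge>M0'. enum_lambda q1 q2 \<tau> k' = (\<Sum>m\<in>{1..M}. Apow q1 q2 (m-1) (\<tau> (prefix w' m)))"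
    using enum_expand[OF reg, of k'] unfolding w'_def by blast
  define M where "M = max (max M0 M0') (Suc q)"
  define a where "a = w q - w' q"
  have a3: "\<not> 3 dvd a" using th[of q] qd unfolding a_def by (auto simp: Theta3_def)
  define D where "D = enum_lambda q1 q2 \<tau> k - enum_lambda q1 q2 \<tau> k'"
  have D1: "fst D = (\<Sum>m\<in>{1..M}. (3*q1) ^ (m-1) * (fst (\<tau> (prefix w m)) - fst (\<tau> (prefix w' m))))"
    unfolding D_def using M0[rule_format, of M] M0'[rule_format, of M]
    by (simp add: M_def fst_sum Apow_def sum_subtractf right_diff_distrib)
  have D2: "snd D = (\<Sum>m\<in>{1..M}. (3*q2) ^ (m-1) * (snd (\<tau> (prefix w m)) - snd (\<tau> (prefix w' m))))"
    unfolding D_def using M0[rule_format, of M] M0'[rule_format, of M]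
    by (simp add: M_def snd_sum Apow_def sum_subtractf right_diff_distrib)
  have td: "(3*q1) dvd (fst (\<tau> (prefix w q @ [w q])) - fst (\<tau> (prefix w q @ [w' q])) - (w q - w' q) * q1)"
    "(3*q2) dvd (snd (\<tau> (prefix w q @ [w q])) - snd (\<tau> (prefix w q @ [w' q])) - (- (w q - w' q) * q2))"
    using tau_diff[OF reg J th(1)[of q] th(2)[of q]] by auto
  have Mq: "Suc q \<le> M" unfolding M_def by simp
  have d1: "(3*q1) ^ Suc q dvd (fst D - (3*q1) ^ q * (a * q1))"
    unfolding D1 a_def
    by (rule dvd_part[OF Mq]) (use pre td psuc in auto)
  have d2: "(3*q2) ^ Suc q dvd (snd D - (3*q2) ^ q * (- a * q2))"
    unfolding D2 a_def
    by (rule dvd_part[OF Mq]) (use pre td psuc in auto)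
  have "mfac q1 q2 (Suc q) (of_int_pair (fst D, snd D)) = 0"
    by (rule mfac_zero[OF q _ _ a3]) (use d1 d2 in \<open>simp_all add: algebra_simps\<close>)
  hence "mfac q1 q2 (Suc q) (of_int_pair D) = 0" by simp
  thus ?thesis using qn unfolding D_def by blast
qed


lemma two_div_odd: "odd (x::int) \<Longrightarrow> 2 * ((x - 1) div 2) = x - 1" by presburger

theorem lemma3p5:
  fixes q1 q2 :: int and \<tau> :: "int list \<Rightarrow> int \<times> int" and n :: nat
  assumes "1 \<le> q1" and "q1 \<le> q2"
    and "regular_mapping q1 q2 \<tau>"
    and "n \<ge> 1"
  shows "spectral_with (mu_n q1 q2 n)
           {of_int_pair (enum_lambda q1 q2 \<tau> k) | k. - ((3 ^ n - 1) div 2) \<le> k \<and> k \<le> (3 ^ n - 1) div 2}"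
proof -
  have q1: "1 \<le> q1" and q2: "1 \<le> q2" and reg: "regular_mapping q1 q2 \<tau>" using assms by auto
  define \<alpha> :: int where "\<alpha> = (3 ^ n - 1) div 2"
  define K where "K = {-\<alpha>..\<alpha>}"
  define lam where "lam = (\<lambda>k. of_int_pair (enum_lambda q1 q2 \<tau> k))"
  define L where "L = lam ` K"
  define \<mu> where "\<mu> = mu_n q1 q2 n"
  have Leq: "{of_int_pair (enum_lambda q1 q2 \<tau> k) | k. - ((3 ^ n - 1) div 2) \<le> k \<and> k \<le> (3 ^ n - 1) div 2} = L"
    unfolding L_def K_def \<alpha>_def lam_def by auto
  have a2: "2 * \<alpha> = 3 ^ n - 1" unfolding \<alpha>_def by (rule two_div_odd) simp
  have rk: "2 * \<bar>k\<bar> \<le> 3 ^ n - 1" if "k \<in> K" for k using that a2 unfolding K_def by auto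
  have zero: "L2_inner \<mu> (expo (lam k)) (expo (lam k')) = 0" if kk: "k \<in> K" "k' \<in> K" "k \<noteq> k'" for k k'
  proof -
    obtain p where p: "p < n" "mfac q1 q2 (Suc p) (of_int_pair (enum_lambda q1 q2 \<tau> k - enum_lambda q1 q2 \<tau> k')) = 0"
      using orth_main[OF reg q1 q2 rk[OF kk(1)] rk[OF kk(2)] kk(3)] by blast
    have "(\<Prod>j\<in>{1..n}. mfac q1 q2 j (of_int_pair (enum_lambda q1 q2 \<tau> k - enum_lambda q1 q2 \<tau> k'))) = 0"
      using p by (intro prod_zero) auto
    thus ?thesis unfolding \<mu>_def L2_inner_dint dint_mu_n_expo lam_def fst_of_int_pair_diff .
  qed
  have one: "L2_inner \<mu> (expo l) (expo l) = 1" for l unfolding \<mu>_def by (rule mass_mu_n[OF q1 q2])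
  have inj: "inj_on lam K"
  proof (rule inj_onI, rule ccontr)
    fix k k' assume "k \<in> K" "k' \<in> K" "lam k = lam k'" "k \<noteq> k'"
    thus False using zero one by (metis zero_neq_one)
  qed
  have "card L = card K" unfolding L_def by (rule card_image[OF inj])
  also have "\<dots> = 3 ^ n" unfolding K_def using a2 by simp
  finally have cardL: "card L = 3 ^ n" .
  have cardS: "card (dsupp \<mu>) \<le> card L" unfolding cardL \<mu>_def by (rule card_mu_n[OF q1 q2])
  have orth: "L2_inner \<mu> (expo l) (expo l') = (if l = l' then 1 else 0)" if ll: "l \<in> L" "l' \<in> L" for l l'
  proof (cases "l = l'")
    case True thus ?thesis using one by simp
  next
    case False
    obtain k k' where "k \<in> K" "k' \<in> K" "l = lam k" "l' = lam k'" using ll unfolding L_def by blast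
    thus ?thesis using zero False by auto
  qed
  have fS: "finite (dsupp \<mu>)" and nn: "\<forall>x. \<mu> x \<ge> 0" unfolding \<mu>_def using mu_n_basic by blast+
  have fL: "finite L" unfolding L_def K_def by simp
  have comp: "\<exists>F c. finite F \<and> F \<subseteq> L \<and> (\<forall>x \<in> dsupp \<mu>. f x = (\<Sum>l \<in> F. c l * expo l x))" for f
  proof -
    have "\<exists>c. \<forall>x\<in>dsupp \<mu>. f x = (\<Sum>l\<in>L. c l * expo l x)"
    proof (rule complete_of_orth[OF fS fL cardS, where w = "\<lambda>x. complex_of_real (\<mu> x)"])
      fix l l' assume "l \<in> L" "l' \<in> L"
      thus "(\<Sum>x\<in>dsupp \<mu>. complex_of_real (\<mu> x) * expo l x * cnj (expo l' x)) = (if l = l' then 1 else 0)"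
        using orth unfolding L2_inner_def by simp
    qed
    thus ?thesis using fL by blast
  qed
  show ?thesis unfolding Leq spectral_with_def \<mu>_def[symmetric] using fS nn orth comp by blast
qed

end
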